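(* Let $m\in\mathbb{N}$ and $\beta\in(1,\frac{m+\sqrt{m^2+4}}{2})$. For every $x\in(0,\frac{m}{\beta-1})$ there exist $n\ge0$ and maps $a_1,\ldots,a_n\in\{T_{\beta,0},\ldots,T_{\beta,m}\}$ with $(a_j\circ\cdots\circ a_1)(x)\in[0,\frac{m}{\beta-1}]$ for all $j\le n$, such that $(a_n\circ\cdots\circ a_1)(x)$ lies in the interior of the switch region $[\frac{1}{\beta},\frac{(m-1)\beta+1}{\beta(\beta-1)}]$.
   Context: $T_{\beta,i}(x)=\beta x-i$ for $i\in\{0,\ldots,m\}$. *)

theory Defs
  imports Complex_Main
begin

definition T :: "real \<Rightarrow> nat \<Rightarrow> real \<Rightarrow> real" where
  "T \<beta> i x = \<beta> * x - real i"

definition iter_T :: "real \<Rightarrow> nat list \<Rightarrow> real \<Rightarrow> real" where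
  "iter_T \<beta> ds x = foldl (\<lambda>y i. T \<beta> i y) x ds"

end

theory Submission
  imports Defs
begin

definition PP :: "nat \<Rightarrow> real \<Rightarrow> real \<Rightarrow> bool" where
  "PP m \<beta> x \<longleftrightarrow> (\<exists>ds :: nat list. (\<forall>i \<in> set ds. i \<le> m)
           \<and> (\<forall>j \<le> length ds. iter_T \<beta> (take j ds) x \<in> {0 .. m / (\<beta> - 1)})
           \<and> iter_T \<beta> ds x \<in> {1 / \<beta> <..< ((real m - 1) * \<beta> + 1) / (\<beta> * (\<beta> - 1))})"

lemma PP_cons:
  assumes "PP m \<beta> (T \<beta> i x)" "i \<le> m" "x \<in> {0 .. m / (\<beta> - 1)}"
  shows "PP m \<beta> x"
proof -
  obtain ds where ds: "\<forall>i \<in> set ds. i \<le> m"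
    "\<forall>j \<le> length ds. iter_T \<beta> (take j ds) (T \<beta> i x) \<in> {0 .. m / (\<beta> - 1)}"
    "iter_T \<beta> ds (T \<beta> i x) \<in> {1 / \<beta> <..< ((real m - 1) * \<beta> + 1) / (\<beta> * (\<beta> - 1))}"
    using assms(1) unfolding PP_def by blast
  have it: "iter_T \<beta> (i # ys) x = iter_T \<beta> ys (T \<beta> i x)" for ys
    by (simp add: iter_T_def)
  show ?thesis unfolding PP_def
  proof (intro exI[of _ "i # ds"] conjI)
    show "\<forall>i \<in> set (i # ds). i \<le> m" using ds(1) assms(2) by auto
    show "\<forall>j \<le> length (i # ds). iter_T \<beta> (take j (i # ds)) x \<in> {0 .. m / (\<beta> - 1)}"
    proof (intro allI impI)
      fix j assume j: "j \<le> length (i # ds)"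
      show "iter_T \<beta> (take j (i # ds)) x \<in> {0 .. m / (\<beta> - 1)}"
      proof (cases j)
        case 0 then show ?thesis using assms(3) by (simp add: iter_T_def)
      next
        case (Suc k) then show ?thesis using ds(2) j it by simp
      qed
    qed
    show "iter_T \<beta> (i # ds) x \<in> {1 / \<beta> <..< ((real m - 1) * \<beta> + 1) / (\<beta> * (\<beta> - 1))}"
      using it ds(3) by simp
  qed
qed

theorem lemma2p4:
  fixes m :: nat and \<beta> x :: real
  assumes "1 < \<beta>" and "\<beta> < (m + sqrt (m\<^sup>2 + 4)) / 2"
    and "0 < x" and "x < m / (\<beta> - 1)"
  shows "\<exists>ds :: nat list. (\<forall>i \<in> set ds. i \<le> m)
           \<and> (\<forall>j \<le> length ds. iter_T \<beta> (take j ds) x \<in> {0 .. m / (\<beta> - 1)})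
           \<and> iter_T \<beta> ds x \<in> {1 / \<beta> <..< ((real m - 1) * \<beta> + 1) / (\<beta> * (\<beta> - 1))}"
proof -
  define L where "L = 1 / \<beta>"
  define R where "R = ((real m - 1) * \<beta> + 1) / (\<beta> * (\<beta> - 1))"
  define M where "M = m / (\<beta> - 1)"
  have b1: "\<beta> - 1 > 0" using assms(1) by simp
  have key: "\<beta>^2 < m * \<beta> + 1"
  proof (cases "2 * \<beta> - m \<le> 0")
    case True
    then have "\<beta> * \<beta> \<le> (m/2) * \<beta>" using assms(1) by (intro mult_right_mono) auto
    moreover have "(m/2) * \<beta> < m * \<beta> + 1" using assms(1) by (simp add: field_simps) (smt (verit) mult_nonneg_nonneg of_nat_0_le_iff)
    moreover have "\<beta> * \<beta> > 0" using assms(1) by simp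
    ultimately show ?thesis by (simp add: power2_eq_square)
  next
    case False
    have "(2 * \<beta> - m)^2 < (sqrt (m\<^sup>2 + 4))^2"
      using False assms(2) by (intro power_strict_mono) auto
    then have "(2 * \<beta> - m)^2 < m^2 + 4" by simp
    then show ?thesis by (simp add: power2_eq_square algebra_simps)
  qed
  have m1: "m \<ge> 1"
  proof (rule ccontr)
    assume "\<not> m \<ge> 1" then have "m = 0" by simp
    then show False using key assms(1) by (simp add: power2_eq_square)
        (smt (verit) mult_less_cancel_left1)
  qed
  have k2: "\<beta> * \<beta> < m * \<beta> + 1" using key by (simp add: power2_eq_square)
  have bm: "\<beta> < m + 1"
  proof (rule ccontr)
    assume "\<not> \<beta> < m + 1"
    then have "\<beta> * \<beta> \<ge> (m+1) * \<beta>" using assms(1) by (intro mult_right_mono) auto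
    then show False using k2 assms(1) by (simp add: algebra_simps)
  qed
  have b2: "(real m - 2) * \<beta> + 2 > 0"
  proof (cases "m \<ge> 2")
    case True then have "real m - 2 \<ge> 0" by simp
    then show ?thesis using assms(1) by (smt (verit) mult_nonneg_nonneg)
  next
    case False then have "m = 1" using m1 by simp
    then show ?thesis using bm by simp
  qed
  have bb: "\<beta> * (\<beta> - 1) > 0" using assms(1) by simp
  have LR: "L < R"
  proof -
    have "L = (\<beta> - 1) / (\<beta> * (\<beta> - 1))" unfolding L_def using b1 by simp
    also have "\<dots> < ((real m - 1) * \<beta> + 1) / (\<beta> * (\<beta> - 1))"
      using b2 bb by (intro divide_strict_right_mono) (auto simp: algebra_simps)
    finally show ?thesis unfolding R_def .
  qed
  have R1: "1 < R" unfolding R_def using bb k2 by (simp add: field_simps)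
  have M1: "1 \<le> M" unfolding M_def using b1 bm by (simp add: field_simps)
  have sq: "0 < (\<beta> - 1) * (\<beta> - 1)" using b1 by simp
  have RM: "R < M" unfolding M_def R_def using bb b1 assms(1) sq
    by (simp add: field_simps)
  have low: "(m + 1 - \<beta>) / (\<beta> - 1) > L" unfolding L_def using b1 assms(1) k2
    by (simp add: field_simps)
  have Lpos: "L > 0" unfolding L_def using assms(1) by simp
  have base: "PP m \<beta> y" if "L < y" "y < R" "0 < y" "y < M" for y
    using that unfolding PP_def L_def R_def M_def by (auto intro!: exI[of _ "[]"] simp: iter_T_def)
  have A: "\<forall>x. 0 < x \<and> x < R \<and> \<beta>^n * x > L \<longrightarrow> PP m \<beta> x" for n
  proof (induction n)
    case 0 then show ?case using base RM by auto
  next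
    case (Suc n)
    show ?case
    proof (intro allI impI)
      fix x assume x: "0 < x \<and> x < R \<and> \<beta> ^ Suc n * x > L"
      show "PP m \<beta> x"
      proof (cases "x > L")
        case True then show ?thesis using x base RM by auto
      next
        case False
        have "T \<beta> 0 x = \<beta> * x" by (simp add: T_def)
        moreover have "\<beta> * x \<le> 1" using False assms(1) unfolding L_def
          by (simp add: field_simps)
        moreover have "\<beta>^n * (\<beta> * x) > L" using x by (simp add: algebra_simps)
        ultimately have "PP m \<beta> (T \<beta> 0 x)" using Suc x R1 assms(1) by auto
        then show ?thesis
          by (rule PP_cons) (use x RM M_def in auto)
      qed
    qed
  qed
  have B: "\<forall>x. L < x \<and> x < M \<and> \<beta>^n * (M - x) > M - R \<longrightarrow> PP m \<beta> x" for n
  proof (induction n)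
    case 0 show ?case
    proof (intro allI impI)
      fix x assume "L < x \<and> x < M \<and> \<beta>^0 * (M - x) > M - R"
      then have "L < x" "x < R" "0 < x" "x < M" using Lpos by auto
      then show "PP m \<beta> x" by (rule base)
    qed
  next
    case (Suc n)
    show ?case
    proof (intro allI impI)
      fix x assume x: "L < x \<and> x < M \<and> \<beta>^Suc n * (M - x) > M - R"
      show "PP m \<beta> x"
      proof (cases "x < R")
        case True then show ?thesis using x base Lpos by auto
      next
        case False
        have Tm: "T \<beta> m x = \<beta> * x - m" by (simp add: T_def)
        have e: "M - (\<beta> * x - m) = \<beta> * (M - x)" unfolding M_def using b1
          by (simp add: field_simps)
        have "\<beta> * R - m = (m + 1 - \<beta>) / (\<beta> - 1)" unfolding R_def using b1 assms(1)
          by (simp add: field_simps)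
        moreover have "\<beta> * R \<le> \<beta> * x" using False assms(1) by simp
        ultimately have "\<beta> * x - m \<ge> (m + 1 - \<beta>) / (\<beta> - 1)" by linarith
        moreover have "\<beta> * x - m < M"
        proof -
          have "\<beta> * (M - x) > 0" using x assms(1) by simp
          then show ?thesis using e by linarith
        qed
        moreover have "\<beta>^n * (M - (\<beta> * x - m)) > M - R" using x e by (simp add: algebra_simps)
        ultimately have "PP m \<beta> (T \<beta> m x)" using Suc low Tm by auto
        then show ?thesis
          by (rule PP_cons) (use x Lpos M_def in auto)
      qed
    qed
  qed
  have "PP m \<beta> x"
  proof (cases "x < R")
    case True
    obtain n where "L / x < \<beta>^n" using real_arch_pow[OF assms(1)] by blast
    then have "\<beta>^n * x > L" using assms(3) by (simp add: field_simps)
    then show ?thesis using A True assms(3) by blast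
  next
    case False
    obtain n where "(M - R) / (M - x) < \<beta>^n" using real_arch_pow[OF assms(1)] by blast
    then have "\<beta>^n * (M - x) > M - R" using assms(4) M_def by (simp add: field_simps)
    then show ?thesis using B False LR assms(4) M_def by auto
  qed
  then show ?thesis unfolding PP_def M_def .
qed

end
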